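(* Let $\{t_n\}$, $\mu_n$, $A$, $B$ and $\{s_n\}$ be as follows: $\{t_n\}_{n\in\mathbb Z}\subset\mathbb R$ increasing with $t_n\to\pm\infty$ as $n\to\pm\infty$; $\mu_n>0$ with $\sum_n\mu_n<\infty$; $A$ entire, real on $\mathbb R$, with only simple zeros, exactly at the $t_n$; $B$ entire defined by $B(z)/A(z)=\sum_n\mu_n/(z-t_n)$; $s_n$ the zero of $B$ in $(t_n,t_{n+1})$. Put $I_n=[t_n,t_{n+1}]$ and assume $|I_k|\asymp|I_n|$ for $n\le k\le 2n$ (constants independent of $k,n$), and that $|t_{an}|\ge\rho|t_n|$ for some $a\ge2$, $\rho>1$ and all $n$. Then for every $\delta>0$ the set of indices $n$ with $t_n>0$ and $t_{n+1}-s_n\ge\delta|I_n|$ has zero density, and likewise the set of indices $n$ with $t_n<0$ and $s_n-t_n\ge\delta|I_n|$ has zero density.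
   Context: A set $\mathcal N$ of integers has zero density if $\operatorname{card}\{n\in\mathcal N:|n|\le R\}/R\to0$ as $R\to\infty$. The notation $U\asymp V$ means $C^{-1}V\le U\le CV$ for a constant $C>0$. *)

theory Defs
  imports "HOL-Analysis.Analysis"
begin

definition zero_density :: "int set \<Rightarrow> bool" where
  "zero_density N \<longleftrightarrow>
     ((\<lambda>R::real. real (card {n\<in>N. real_of_int \<bar>n\<bar> \<le> R}) / R) \<longlongrightarrow> 0) at_top"

end

theory Submission
  imports Defs "HOL-Computational_Algebra.Polynomial"
begin

lemma lin_mult_coeff: "coeff ([:a, 1:] * p) (Suc n) = a * coeff p (Suc n) + coeff p n"
  for a :: real by (simp add: mult_pCons_left)

lemma prod_lin:
  fixes c :: "'a \<Rightarrow> real"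
  assumes "finite S"
  shows "degree (\<Prod>k\<in>S. [:-c k, 1:]) = card S \<and> coeff (\<Prod>k\<in>S. [:-c k, 1:]) (card S) = 1
     \<and> (S \<noteq> {} \<longrightarrow> coeff (\<Prod>k\<in>S. [:-c k, 1:]) (card S - 1) = - (\<Sum>k\<in>S. c k))"
  using assms
proof (induction S rule: finite_induct)
  case empty
  then show ?case by simp
next
  case (insert x S)
  let ?P = "\<Prod>k\<in>S. [:-c k, 1:]"
  have P: "(\<Prod>k\<in>insert x S. [:-c k, 1:]) = [:-c x, 1:] * ?P" using insert by simp
  have dP: "degree ?P = card S" and lP: "coeff ?P (card S) = 1" using insert by auto
  have nz: "?P \<noteq> 0" using lP by auto
  have deg: "degree ([:-c x, 1:] * ?P) = card S + 1"
    using nz by (subst degree_mult_eq) (auto simp: dP)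
  have c1: "coeff ([:-c x, 1:] * ?P) (card S + 1) = 1"
    using lin_mult_coeff[of "-c x" ?P "card S"] lP dP by (simp add: coeff_eq_0)
  have c2: "coeff ([:-c x, 1:] * ?P) (card S) = - (\<Sum>k\<in>insert x S. c k)"
  proof (cases "S = {}")
    case True then show ?thesis by simp
  next
    case False
    have "card S > 0" using insert(1) False by (simp add: card_gt_0_iff)
    then obtain m where m: "card S = Suc m" using gr0_implies_Suc by blast
    have "coeff ([:-c x, 1:] * ?P) (Suc m) = -c x * coeff ?P (Suc m) + coeff ?P m"
      by (rule lin_mult_coeff)
    moreover have "coeff ?P m = - (\<Sum>k\<in>S. c k)" using insert False m by simp
    ultimately show ?thesis using insert lP m by simp
  qed
  show ?case using insert P deg c1 c2 by simp
qed


lemma boole_roots: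
  fixes t \<mu> :: "int \<Rightarrow> real" and L U :: int and lam :: real
  assumes tm: "strict_mono t" and LU: "L < U" and mu: "\<And>k. k \<in> {L<..U} \<Longrightarrow> \<mu> k > 0"
    and lam: "lam > 0"
  defines "f \<equiv> (\<lambda>x. \<Sum>k\<in>{L<..U}. \<mu> k / (x - t k))"
  shows "\<exists>r. (\<forall>k\<in>{L<..U}. r k < t k \<and> (k \<noteq> L+1 \<longrightarrow> t (k-1) < r k) \<and> f (r k) = - lam)
            \<and> (\<Sum>k\<in>{L<..U}. t k - r k) = (\<Sum>k\<in>{L<..U}. \<mu> k) / lam"
proof -
  define K where "K = {L<..U}"
  have finK: "finite K" unfolding K_def by simp
  define m where "m = card K"
  have m_pos: "m > 0" unfolding m_def K_def using LU by simp
  have L1K: "L+1 \<in> K" unfolding K_def using LU by simp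
  define M where "M = (\<Sum>k\<in>K. \<mu> k)"
  have tlt: "\<And>i j. i < j \<Longrightarrow> t i < t j" using tm by (simp add: strict_mono_less)
  have tle: "\<And>i j. i \<le> j \<Longrightarrow> t i \<le> t j" using tm by (simp add: strict_mono_less_eq)
  define P where "P = (\<Prod>j\<in>K. [:-t j, 1:])"
  define Pk where "Pk k = (\<Prod>j\<in>K-{k}. [:-t j, 1:])" for k
  define Q where "Q = smult lam P + (\<Sum>k\<in>K. smult (\<mu> k) (Pk k))"
  have polyQ: "poly Q x = lam * (\<Prod>j\<in>K. x - t j) + (\<Sum>k\<in>K. \<mu> k * (\<Prod>j\<in>K-{k}. x - t j))" for x
    unfolding Q_def P_def Pk_def by (simp add: poly_prod poly_sum)
  have Q2: "poly Q x = (\<Prod>j\<in>K. x - t j) * (lam + f x)" if x: "\<And>k. k \<in> K \<Longrightarrow> x \<noteq> t k" for x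
  proof -
    have "(\<Prod>j\<in>K-{k}. x - t j) = (\<Prod>j\<in>K. x - t j) / (x - t k)" if "k \<in> K" for k
      using that x finK by (simp add: prod_diff1)
    then have "(\<Sum>k\<in>K. \<mu> k * (\<Prod>j\<in>K-{k}. x - t j)) = (\<Prod>j\<in>K. x - t j) * f x"
      unfolding f_def K_def[symmetric] by (simp add: sum_distrib_left mult_ac)
    then show ?thesis using polyQ by (simp add: algebra_simps)
  qed
  have Q3: "poly Q (t k) = \<mu> k * (\<Prod>j\<in>K-{k}. t k - t j)" if k: "k \<in> K" for k
  proof -
    have "(\<Prod>j\<in>K. t k - t j) = 0" using k finK by (intro prod_zero) auto
    moreover have "(\<Sum>i\<in>K. \<mu> i * (\<Prod>j\<in>K-{i}. t k - t j)) = \<mu> k * (\<Prod>j\<in>K-{k}. t k - t j)"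
    proof (rule sum.remove[OF finK k, THEN trans])
      have "(\<Sum>i\<in>K-{k}. \<mu> i * (\<Prod>j\<in>K-{i}. t k - t j)) = 0"
      proof (intro sum.neutral ballI)
        fix i assume "i \<in> K - {k}"
        then have "(\<Prod>j\<in>K-{i}. t k - t j) = 0" using k finK by (intro prod_zero) auto
        then show "\<mu> i * (\<Prod>j\<in>K-{i}. t k - t j) = 0" by simp
      qed
      then show "\<mu> k * (\<Prod>j\<in>K-{k}. t k - t j) + (\<Sum>i\<in>K-{k}. \<mu> i * (\<Prod>j\<in>K-{i}. t k - t j)) =
          \<mu> k * (\<Prod>j\<in>K-{k}. t k - t j)" by simp
    qed
    ultimately show ?thesis using polyQ by simp
  qed
  have Q4: "poly Q (t (k-1)) * poly Q (t k) < 0" if k: "k \<in> K" "k-1 \<in> K" for k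
  proof -
    define K' where "K' = K - {k-1, k}"
    have fK': "finite K'" using finK K'_def by simp
    have e1: "K - {k-1} = insert k K'" "K - {k} = insert (k-1) K'" and nin: "k \<notin> K'" "k-1 \<notin> K'"
      using k unfolding K'_def by auto
    have p1: "(\<Prod>j\<in>K-{k-1}. t (k-1) - t j) = (t (k-1) - t k) * (\<Prod>j\<in>K'. t (k-1) - t j)"
      unfolding e1 using fK' nin by simp
    have p2: "(\<Prod>j\<in>K-{k}. t k - t j) = (t k - t (k-1)) * (\<Prod>j\<in>K'. t k - t j)"
      unfolding e1 using fK' nin by simp
    have pos: "(\<Prod>j\<in>K'. (t (k-1) - t j) * (t k - t j)) > 0"
    proof (intro prod_pos ballI)
      fix j assume j: "j \<in> K'"
      then have "j < k - 1 \<or> j > k" unfolding K'_def by auto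
      then show "(t (k-1) - t j) * (t k - t j) > 0"
      proof
        assume "j < k - 1" then have "t j < t (k-1)" "t (k-1) < t k" using tlt by auto
        then show ?thesis by (intro mult_pos_pos) auto
      next
        assume "j > k" then have "t j > t k" "t (k-1) < t k" using tlt by auto
        then show ?thesis by (intro mult_neg_neg) auto
      qed
    qed
    have d: "t (k-1) < t k" using tlt by simp
    have "poly Q (t (k-1)) * poly Q (t k) = (\<mu> (k-1) * \<mu> k) * ((t (k-1) - t k) * (t k - t (k-1)))
          * (\<Prod>j\<in>K'. (t (k-1) - t j) * (t k - t j))"
      using Q3[OF k(1)] Q3[OF k(2)] p1 p2 by (simp add: prod.distrib mult_ac)
    also have "\<dots> < 0"
    proof (rule mult_neg_pos[OF _ pos])
      have "\<mu> (k-1) * \<mu> k > 0" using mu k unfolding K_def by auto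
      moreover have "(t (k-1) - t k) * (t k - t (k-1)) < 0" using d by (intro mult_neg_pos) auto
      ultimately show "\<mu> (k-1) * \<mu> k * ((t (k-1) - t k) * (t k - t (k-1))) < 0"
        by (rule mult_pos_neg)
    qed
    finally show ?thesis .
  qed
  have Mpos: "M > 0" unfolding M_def using mu finK L1K unfolding K_def by (intro sum_pos) auto
  define x0 where "x0 = t (L+1) - M / lam"
  have x0lt: "x0 < t (L+1)" unfolding x0_def using Mpos lam by simp
  have x0ne: "x0 < t k" if "k \<in> K" for k
    using that x0lt tle[of "L+1" k] unfolding K_def by auto
  have fx0: "f x0 \<ge> - lam"
  proof -
    have "\<mu> k / (x0 - t k) \<ge> \<mu> k * (- lam / M)" if k: "k \<in> K" for k
    proof -
      have "x0 - t k \<le> - (M / lam)" using tle[of "L+1" k] k unfolding K_def x0_def by auto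
      moreover have "M / lam > 0" using Mpos lam by simp
      ultimately have "inverse (- (M / lam)) \<le> inverse (x0 - t k)"
        by (intro le_imp_inverse_le_neg) auto
      then have "1 / (x0 - t k) \<ge> - lam / M" by (simp add: inverse_eq_divide)
      then show ?thesis using mu[of k] k unfolding K_def
        by (metis mult_left_mono less_imp_le times_divide_eq_right mult_1_right)
    qed
    then have "f x0 \<ge> (\<Sum>k\<in>K. \<mu> k * (- lam / M))"
      unfolding f_def K_def[symmetric] by (intro sum_mono) auto
    also have "(\<Sum>k\<in>K. \<mu> k * (- lam / M)) = M * (- lam / M)"
      unfolding M_def by (rule sum_distrib_right[symmetric])
    also have "\<dots> = - lam" using Mpos by simp
    finally show ?thesis by simp
  qed
  have Q5: "poly Q x0 * poly Q (t (L+1)) \<le> 0"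
  proof -
    define K1 where "K1 = K - {L+1}"
    have fK1: "finite K1" using finK K1_def by simp
    have eK: "K = insert (L+1) K1" "L+1 \<notin> K1" using L1K K1_def by auto
    have pa: "(\<Prod>j\<in>K. x0 - t j) = (x0 - t (L+1)) * (\<Prod>j\<in>K1. x0 - t j)"
      using fK1 eK by (metis prod.insert)
    have pos: "(\<Prod>j\<in>K1. (x0 - t j) * (t (L+1) - t j)) > 0"
    proof (intro prod_pos ballI)
      fix j assume j: "j \<in> K1"
      then have "j > L + 1" "j \<in> K" unfolding K1_def K_def by auto
      then have "t j > t (L+1)" "x0 < t j" using tlt x0ne by auto
      then show "(x0 - t j) * (t (L+1) - t j) > 0" by (intro mult_neg_neg) auto
    qed
    have "poly Q x0 * poly Q (t (L+1)) = ((x0 - t (L+1)) * ((lam + f x0) * \<mu> (L+1)))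
          * (\<Prod>j\<in>K1. (x0 - t j) * (t (L+1) - t j))"
      using Q2[of x0] x0ne Q3[OF L1K] pa unfolding K1_def[symmetric]
      by (auto simp: prod.distrib mult_ac)
    also have "\<dots> \<le> 0"
    proof (rule mult_nonpos_nonneg)
      have "(lam + f x0) * \<mu> (L+1) \<ge> 0" using fx0 mu[of "L+1"] LU by simp
      then show "(x0 - t (L+1)) * ((lam + f x0) * \<mu> (L+1)) \<le> 0" using x0lt
        by (intro mult_nonpos_nonneg) auto
    qed (use pos in simp)
    finally show ?thesis .
  qed
  have root: "\<forall>k\<in>K. \<exists>x. poly Q x = 0 \<and> x < t k \<and> (k \<noteq> L+1 \<longrightarrow> t (k-1) < x)"
  proof
    fix k assume k: "k \<in> K"
    show "\<exists>x. poly Q x = 0 \<and> x < t k \<and> (k \<noteq> L+1 \<longrightarrow> t (k-1) < x)"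
    proof (cases "k = L+1")
      case True
      show ?thesis
      proof (cases "poly Q x0 = 0")
        case True then show ?thesis using x0lt \<open>k = L+1\<close> by auto
      next
        case False
        have tinj: "t (L+1) - t j \<noteq> 0" if "j \<in> K - {L+1}" for j
          using that tlt[of j "L+1"] tlt[of "L+1" j] by (cases "j < L+1") auto
        have "(\<Prod>j\<in>K-{L+1}. t (L+1) - t j) \<noteq> 0" using tinj finK by (auto simp: prod_zero_iff)
        moreover have "\<mu> (L+1) > 0" using mu L1K unfolding K_def by auto
        ultimately have "poly Q (t (L+1)) \<noteq> 0" using Q3[OF L1K] by simp
        then have "poly Q x0 * poly Q (t (L+1)) < 0" using Q5 False
          by (simp add: order.order_iff_strict)
        then obtain x where "x > x0" "x < t (L+1)" "poly Q x = 0" using poly_IVT[OF x0lt] by blast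
        then show ?thesis using True by auto
      qed
    next
      case False
      then have k1: "k-1 \<in> K" using k unfolding K_def by auto
      have "t (k-1) < t k" using tlt by simp
      then obtain x where "x > t (k-1)" "x < t k" "poly Q x = 0" using poly_IVT Q4[OF k k1] by blast
      then show ?thesis by auto
    qed
  qed
  then obtain r where r: "\<And>k. k \<in> K \<Longrightarrow> poly Q (r k) = 0 \<and> r k < t k \<and> (k \<noteq> L+1 \<longrightarrow> t (k-1) < r k)"
    by metis
  have rmono: "r i < r j" if "i \<in> K" "j \<in> K" "i < j" for i j
  proof -
    have "j \<noteq> L+1" using that unfolding K_def by auto
    then have "t (j-1) < r j" using r[OF that(2)] by auto
    moreover have "t i \<le> t (j-1)" using that tle by auto
    ultimately show ?thesis using r[OF that(1)] by auto
  qed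
  have rinj: "inj_on r K"
  proof (rule inj_onI)
    fix i j assume "i \<in> K" "j \<in> K" "r i = r j"
    then show "i = j" using rmono[of i j] rmono[of j i] by (cases i j rule: linorder_cases) auto
  qed
  have rne: "r k \<noteq> t j" if "k \<in> K" "j \<in> K" for k j
  proof (cases "j \<ge> k")
    case True then show ?thesis using r[OF that(1)] tle[of k j] by auto
  next
    case False
    then have "k \<noteq> L+1" using that unfolding K_def by auto
    then show ?thesis using r[OF that(1)] tle[of j "k-1"] False by auto
  qed
  have fr: "f (r k) = - lam" if k: "k \<in> K" for k
  proof -
    have "(\<Prod>j\<in>K. r k - t j) \<noteq> 0" using rne[OF k] finK by (auto simp: prod_zero_iff)
    moreover have "(\<Prod>j\<in>K. r k - t j) * (lam + f (r k)) = 0"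
      using Q2[of "r k"] rne[OF k] r[OF k] by auto
    ultimately show ?thesis by simp
  qed
  have Kne: "K \<noteq> {}" using L1K by auto
  have PL: "degree P = m" "coeff P m = 1" "coeff P (m-1) = - (\<Sum>k\<in>K. t k)"
    using prod_lin[OF finK, of t] Kne unfolding P_def m_def by auto
  have PkL: "degree (Pk k) = m - 1" "coeff (Pk k) (m-1) = 1" if "k \<in> K" for k
  proof -
    have "card (K - {k}) = m - 1" using that finK unfolding m_def by simp
    then show "degree (Pk k) = m - 1" "coeff (Pk k) (m-1) = 1"
      using prod_lin[of "K - {k}" t] finK unfolding Pk_def by auto
  qed
  have coeffQ: "coeff Q n = lam * coeff P n + (\<Sum>k\<in>K. \<mu> k * coeff (Pk k) n)" for n
    unfolding Q_def by (simp add: coeff_sum)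
  have Pk0: "coeff (Pk k) n = 0" if "k \<in> K" "n \<ge> m" for k n
    using PkL(1)[OF that(1)] that m_pos by (intro coeff_eq_0) auto
  have degQ: "degree Q \<le> m"
  proof (rule degree_le, intro allI impI)
    fix i assume "m < i"
    then show "coeff Q i = 0" using coeffQ[of i] Pk0 PL(1) by (simp add: coeff_eq_0)
  qed
  have cQm: "coeff Q m = lam" using coeffQ[of m] Pk0 PL(2) by simp
  have cQm1: "coeff Q (m-1) = - lam * (\<Sum>k\<in>K. t k) + M"
    using coeffQ[of "m-1"] PkL(2) PL(3) unfolding M_def by simp
  define R where "R = (\<Prod>k\<in>K. [:-r k, 1:])"
  have RL: "degree R = m" "coeff R m = 1" "coeff R (m-1) = - (\<Sum>k\<in>K. r k)"
    using prod_lin[OF finK, of r] Kne unfolding R_def m_def by auto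
  have QR: "Q = smult lam R"
  proof (rule poly_eqI_degree_lead_coeff[where n = m and A = "r ` K"])
    show "coeff Q m = coeff (smult lam R) m" using cQm RL by simp
    show "m \<le> card (r ` K)" using card_image[OF rinj] unfolding m_def by simp
    show "degree Q \<le> m" by (rule degQ)
    show "degree (smult lam R) \<le> m" using RL by simp
    fix z assume "z \<in> r ` K"
    then obtain k where k: "k \<in> K" "z = r k" by auto
    have "poly R z = 0" unfolding R_def using k finK by (auto simp: poly_prod prod_zero_iff)
    then show "poly Q z = poly (smult lam R) z" using r[OF k(1)] k by simp
  qed
  have "- lam * (\<Sum>k\<in>K. t k) + M = lam * (- (\<Sum>k\<in>K. r k))"
    using cQm1 RL(3) QR by simp
  then have "(\<Sum>k\<in>K. t k) - (\<Sum>k\<in>K. r k) = M / lam" using lam by (simp add: field_simps)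
  then have sumeq: "(\<Sum>k\<in>K. t k - r k) = M / lam" by (simp add: sum_subtractf)
  show ?thesis
    apply (rule exI[of _ r])
    using r fr sumeq unfolding K_def M_def by auto
qed


lemma f_strict_anti:
  fixes t \<mu> :: "int \<Rightarrow> real"
  assumes tm: "strict_mono t" and mu: "\<And>k. k \<in> K \<Longrightarrow> \<mu> k > 0" and fin: "finite K" and ne: "K \<noteq> {}"
    and y: "t n < y1" "y1 < y2" "y2 < t (n+1)"
  shows "(\<Sum>k\<in>K. \<mu> k / (y2 - t k)) < (\<Sum>k\<in>K. \<mu> k / (y1 - t k))"
proof (rule sum_strict_mono[OF fin ne])
  fix j assume j: "j \<in> K"
  show "\<mu> j / (y2 - t j) < \<mu> j / (y1 - t j)"
  proof (cases "j \<le> n")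
    case True
    then have "t j \<le> t n" using tm by (simp add: strict_mono_less_eq)
    then have "0 < y1 - t j" "y1 - t j < y2 - t j" using y by auto
    then show ?thesis using mu[OF j] by (intro divide_strict_left_mono) auto
  next
    case False
    then have "t (n+1) \<le> t j" using tm by (simp add: strict_mono_less_eq)
    then have "y2 - t j < 0" "y1 - t j < y2 - t j" using y by auto
    then have "inverse (y2 - t j) < inverse (y1 - t j)" by (intro less_imp_inverse_less_neg) auto
    then have "\<mu> j * inverse (y2 - t j) < \<mu> j * inverse (y1 - t j)" using mu[OF j]
      by (intro mult_strict_left_mono) auto
    then show ?thesis by (simp add: divide_inverse)
  qed
qed

lemma boole_count:
  fixes t \<mu> x :: "int \<Rightarrow> real" and L U :: int and lam :: real
  assumes tm: "strict_mono t" and LU: "L < U" and mu: "\<And>k. k \<in> {L<..U} \<Longrightarrow> \<mu> k > 0"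
    and lam: "lam > 0" and S: "S \<subseteq> {L<..<U}"
    and x: "\<And>n. n \<in> S \<Longrightarrow> t n < x n \<and> x n < t (n+1) \<and> (\<Sum>k\<in>{L<..U}. \<mu> k / (x n - t k)) \<le> - lam"
  shows "(\<Sum>n\<in>S. t (n+1) - x n) \<le> (\<Sum>k\<in>{L<..U}. \<mu> k) / lam"
proof -
  obtain r where r: "\<forall>k\<in>{L<..U}. r k < t k \<and> (k \<noteq> L+1 \<longrightarrow> t (k-1) < r k)
       \<and> (\<Sum>j\<in>{L<..U}. \<mu> j / (r k - t j)) = - lam"
    and sr: "(\<Sum>k\<in>{L<..U}. t k - r k) = (\<Sum>k\<in>{L<..U}. \<mu> k) / lam"
    using boole_roots[of t L U \<mu> lam, OF tm LU mu lam] by blast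
  have finS: "finite S" using S finite_subset by blast
  have le: "t (n+1) - x n \<le> t (n+1) - r (n+1)" if n: "n \<in> S" for n
  proof (rule ccontr)
    assume "\<not> ?thesis"
    then have xr: "x n < r (n+1)" by simp
    have nK: "n+1 \<in> {L<..U}" "n+1 \<noteq> L+1" using S n by auto
    then have "r (n+1) < t (n+1) \<and> t ((n+1)-1) < r (n+1)" using r by blast
    then have rn: "t n < r (n+1)" "r (n+1) < t (n+1)" by auto
    have "(\<Sum>j\<in>{L<..U}. \<mu> j / (r (n+1) - t j)) < (\<Sum>j\<in>{L<..U}. \<mu> j / (x n - t j))"
      by (rule f_strict_anti[OF tm mu]) (use LU x[OF n] xr rn in auto)
    then show False using r nK x[OF n] by auto
  qed
  have "(\<Sum>n\<in>S. t (n+1) - x n) \<le> (\<Sum>n\<in>S. t (n+1) - r (n+1))" by (rule sum_mono) (rule le)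
  also have "\<dots> = (\<Sum>k\<in>(\<lambda>n. n+1) ` S. t k - r k)" by (simp add: sum.reindex)
  also have "\<dots> \<le> (\<Sum>k\<in>{L<..U}. t k - r k)"
    by (rule sum_mono2) (use S r in \<open>auto simp: less_imp_le\<close>)
  finally show ?thesis using sr by simp
qed


lemma fin_absle: "finite {n::int. real_of_int \<bar>n\<bar> \<le> R}"
proof (rule finite_subset)
  show "{n::int. real_of_int \<bar>n\<bar> \<le> R} \<subseteq> {-\<lceil>R\<rceil>..\<lceil>R\<rceil>}"
  proof
    fix n :: int assume "n \<in> {n. real_of_int \<bar>n\<bar> \<le> R}"
    then have "real_of_int \<bar>n\<bar> \<le> R" by simp
    then have "\<bar>n\<bar> \<le> \<lceil>R\<rceil>" by linarith
    then show "n \<in> {-\<lceil>R\<rceil>..\<lceil>R\<rceil>}" by auto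
  qed
qed simp

lemma fin_absle': "finite {n\<in>A. real_of_int \<bar>n\<bar> \<le> R}"
  by (rule finite_subset[OF _ fin_absle[of R]]) auto

lemma zd_mono:
  assumes "A \<subseteq> B" "zero_density B"
  shows "zero_density A"
  unfolding zero_density_def
proof (rule tendsto_sandwich[of "\<lambda>R. 0" _ _ "\<lambda>R::real. real (card {n\<in>B. real_of_int \<bar>n\<bar> \<le> R}) / R"])
  show "\<forall>\<^sub>F R in at_top. 0 \<le> real (card {n\<in>A. real_of_int \<bar>n\<bar> \<le> R}) / R"
    using eventually_ge_at_top[of "0::real"] by eventually_elim simp
  show "\<forall>\<^sub>F R in at_top. real (card {n\<in>A. real_of_int \<bar>n\<bar> \<le> R}) / R
      \<le> real (card {n\<in>B. real_of_int \<bar>n\<bar> \<le> R}) / R"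
    using eventually_ge_at_top[of "0::real"]
  proof eventually_elim
    case (elim R)
    have "card {n\<in>A. real_of_int \<bar>n\<bar> \<le> R} \<le> card {n\<in>B. real_of_int \<bar>n\<bar> \<le> R}"
      by (rule card_mono[OF fin_absle']) (use assms(1) in auto)
    then show ?case using elim by (intro divide_right_mono) auto
  qed
qed (use assms(2) zero_density_def in auto)

lemma zd_reflect:
  assumes "zero_density A"
  shows "zero_density ((\<lambda>m. - m - 1) ` A)"
proof -
  define g where "g R = real (card {n\<in>A. real_of_int \<bar>n\<bar> \<le> R}) / R" for R :: real
  have g0: "(g \<longlongrightarrow> 0) at_top" using assms unfolding zero_density_def g_def by simp
  have "((\<lambda>R. g (R + 1)) \<longlongrightarrow> 0) at_top"
    by (rule filterlim_compose[OF g0]) real_asymp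
  moreover have "((\<lambda>R::real. (R + 1) / R) \<longlongrightarrow> 1) at_top" by real_asymp
  ultimately have lim: "((\<lambda>R. g (R + 1) * ((R + 1) / R)) \<longlongrightarrow> 0 * 1) at_top"
    by (rule tendsto_mult)
  show ?thesis
    unfolding zero_density_def
  proof (rule tendsto_sandwich[of "\<lambda>R. 0" _ _ "\<lambda>R. g (R + 1) * ((R + 1) / R)"])
    show "\<forall>\<^sub>F R in at_top. 0 \<le> real (card {n\<in>(\<lambda>m. - m - 1) ` A. real_of_int \<bar>n\<bar> \<le> R}) / R"
      using eventually_ge_at_top[of "0::real"] by eventually_elim simp
    show "\<forall>\<^sub>F R in at_top. real (card {n\<in>(\<lambda>m. - m - 1) ` A. real_of_int \<bar>n\<bar> \<le> R}) / R
        \<le> g (R + 1) * ((R + 1) / R)"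
      using eventually_gt_at_top[of "0::real"]
    proof eventually_elim
      case (elim R)
      have sub: "{n\<in>(\<lambda>m. - m - 1) ` A. real_of_int \<bar>n\<bar> \<le> R}
          \<subseteq> (\<lambda>m. - m - 1) ` {n\<in>A. real_of_int \<bar>n\<bar> \<le> R + 1}"
      proof
        fix n assume "n \<in> {n\<in>(\<lambda>m. - m - 1) ` A. real_of_int \<bar>n\<bar> \<le> R}"
        then obtain m where m: "m \<in> A" "n = - m - 1" "real_of_int \<bar>n\<bar> \<le> R" by auto
        then have "real_of_int \<bar>m\<bar> \<le> R + 1" by linarith
        then show "n \<in> (\<lambda>m. - m - 1) ` {n\<in>A. real_of_int \<bar>n\<bar> \<le> R + 1}" using m by auto
      qed
      have "card {n\<in>(\<lambda>m. - m - 1) ` A. real_of_int \<bar>n\<bar> \<le> R}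
          \<le> card ((\<lambda>m. - m - 1) ` {n\<in>A. real_of_int \<bar>n\<bar> \<le> R + 1})"
        by (rule card_mono[OF finite_imageI[OF fin_absle'] sub])
      also have "\<dots> \<le> card {n\<in>A. real_of_int \<bar>n\<bar> \<le> R + 1}" by (rule card_image_le[OF fin_absle'])
      finally have c: "real (card {n\<in>(\<lambda>m. - m - 1) ` A. real_of_int \<bar>n\<bar> \<le> R})
          \<le> real (card {n\<in>A. real_of_int \<bar>n\<bar> \<le> R + 1})" by simp
      have "g (R + 1) * ((R + 1) / R) = real (card {n\<in>A. real_of_int \<bar>n\<bar> \<le> R + 1}) / R"
        using elim unfolding g_def by (simp add: divide_simps)
      then show ?case using c elim by (simp add: divide_right_mono)
    qed
  qed (use lim in auto)
qed

lemma dyadic: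
  fixes S :: "int set" and \<epsilon> :: real and N1 :: int
  assumes N1: "N1 \<ge> 1" and eps: "\<epsilon> \<ge> 0"
    and blk: "\<And>N. N \<ge> N1 \<Longrightarrow> real (card (S \<inter> {N..2*N+1})) \<le> \<epsilon> * N"
  shows "R \<ge> 0 \<Longrightarrow> real (card (S \<inter> {N1..R})) \<le> 2 * \<epsilon> * R"
proof (induction "nat R" arbitrary: R rule: less_induct)
  case less
  show ?case
  proof (cases "R < N1")
    case True
    then have "S \<inter> {N1..R} = {}" by auto
    then show ?thesis using less.prems eps by simp
  next
    case False
    show ?thesis
    proof (cases "R \<le> 2 * N1 + 1")
      case True
      have "card (S \<inter> {N1..R}) \<le> card (S \<inter> {N1..2*N1+1})"
        by (rule card_mono) (use True in auto)
      then have "real (card (S \<inter> {N1..R})) \<le> \<epsilon> * N1" using blk[of N1] by linarith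
      also have "\<dots> \<le> 2 * \<epsilon> * R"
      proof -
        have "real_of_int N1 \<le> real_of_int R" "real_of_int R \<ge> 0" using False less.prems by auto
        then have "\<epsilon> * N1 \<le> \<epsilon> * R" "\<epsilon> * R \<ge> 0" using eps by (auto intro: mult_left_mono)
        then show ?thesis by linarith
      qed
      finally show ?thesis .
    next
      case big: False
      define M where "M = R div 2"
      have M1: "M \<ge> N1 + 1" "2 * M \<le> R" "R \<le> 2 * M + 1" using big unfolding M_def by auto
      have "nat (M - 1) < nat R" using M1 N1 by auto
      then have IH: "real (card (S \<inter> {N1..M-1})) \<le> 2 * \<epsilon> * (M - 1)"
        using less.hyps[of "M - 1"] M1 N1 by auto
      have "S \<inter> {N1..R} \<subseteq> (S \<inter> {N1..M-1}) \<union> (S \<inter> {M..2*M+1})" using M1 by auto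
      then have "card (S \<inter> {N1..R}) \<le> card ((S \<inter> {N1..M-1}) \<union> (S \<inter> {M..2*M+1}))"
        by (intro card_mono) auto
      also have "\<dots> \<le> card (S \<inter> {N1..M-1}) + card (S \<inter> {M..2*M+1})" by (rule card_Un_le)
      finally have "real (card (S \<inter> {N1..R})) \<le> real (card (S \<inter> {N1..M-1})) + real (card (S \<inter> {M..2*M+1}))"
        by linarith
      also have "\<dots> \<le> 2 * \<epsilon> * (M - 1) + \<epsilon> * M" using IH blk[of M] M1 by linarith
      also have "\<dots> \<le> 2 * \<epsilon> * R"
      proof -
        have "3 * M \<le> 2 * R" using M1 N1 by linarith
        then have "real_of_int (3 * M) \<le> real_of_int (2 * R)" by (simp only: of_int_le_iff)
        then have "0 \<le> \<epsilon> * (2 * real_of_int R - 3 * real_of_int M)" using eps by (intro mult_nonneg_nonneg) auto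
        then show ?thesis using eps by (simp add: algebra_simps)
      qed
      finally show ?thesis .
    qed
  qed
qed

lemma density_from_blocks:
  fixes S :: "int set"
  assumes low: "S \<subseteq> {b..}"
    and blk: "\<And>\<epsilon>::real. \<epsilon> > 0 \<Longrightarrow> \<exists>N1\<ge>1. \<forall>N\<ge>N1. real (card (S \<inter> {N..2*N+1})) \<le> \<epsilon> * real_of_int N"
  shows "zero_density S"
  unfolding zero_density_def
proof (rule tendstoI)
  fix e :: real assume e: "e > 0"
  obtain N1 where N1: "N1 \<ge> 1" "\<And>N. N \<ge> N1 \<Longrightarrow> real (card (S \<inter> {N..2*N+1})) \<le> (e/4) * real_of_int N"
    using blk[of "e/4"] e by auto
  define c0 where "c0 = real (card {b..N1-1})"
  have c0: "c0 \<ge> 0" unfolding c0_def by simp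
  show "\<forall>\<^sub>F R in at_top. dist (real (card {n\<in>S. real_of_int \<bar>n\<bar> \<le> R}) / R) 0 < e"
    using eventually_ge_at_top[of "max 1 (4 * c0 / e + 1)"]
  proof eventually_elim
    case (elim R)
    have R1: "R \<ge> 1" and R2: "R \<ge> 4 * c0 / e + 1" using elim by auto
    define fR where "fR = \<lfloor>R\<rfloor>"
    have fR: "real_of_int fR \<le> R" "fR \<ge> 0" unfolding fR_def using R1 by auto
    have sub: "{n\<in>S. real_of_int \<bar>n\<bar> \<le> R} \<subseteq> {b..N1-1} \<union> (S \<inter> {N1..fR})"
    proof
      fix n assume n: "n \<in> {n\<in>S. real_of_int \<bar>n\<bar> \<le> R}"
      then have "n \<ge> b" "n \<le> fR" using low unfolding fR_def by auto linarith
      then show "n \<in> {b..N1-1} \<union> (S \<inter> {N1..fR})" using n by auto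
    qed
    have "card {n\<in>S. real_of_int \<bar>n\<bar> \<le> R} \<le> card ({b..N1-1} \<union> (S \<inter> {N1..fR}))"
      by (rule card_mono[OF _ sub]) auto
    also have "\<dots> \<le> card {b..N1-1} + card (S \<inter> {N1..fR})" by (rule card_Un_le)
    finally have "real (card {n\<in>S. real_of_int \<bar>n\<bar> \<le> R}) \<le> c0 + real (card (S \<inter> {N1..fR}))"
      unfolding c0_def by linarith
    also have "\<dots> \<le> c0 + 2 * (e/4) * real_of_int fR" using dyadic[OF N1(1) _ N1(2) fR(2)] e by auto
    also have "\<dots> \<le> c0 + (e/2) * R" using fR e by (simp add: mult_left_mono)
    finally have num: "real (card {n\<in>S. real_of_int \<bar>n\<bar> \<le> R}) \<le> c0 + (e/2) * R" .
    have "c0 < (e/2) * R"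
    proof -
      have "4 * c0 / e < R" using R2 by linarith
      then have "4 * c0 < e * R" using e by (simp add: divide_less_eq mult.commute)
      then show ?thesis using c0 by linarith
    qed
    then have "real (card {n\<in>S. real_of_int \<bar>n\<bar> \<le> R}) < e * R" using num by linarith
    then have "real (card {n\<in>S. real_of_int \<bar>n\<bar> \<le> R}) / R < e" using R1 by (simp add: divide_less_eq)
    then show ?case using R1 by simp
  qed
qed


lemma summ_local:
  fixes t \<mu> :: "int \<Rightarrow> real"
  assumes tm: "strict_mono t" and mu: "\<And>k. \<mu> k \<ge> 0" and ms: "\<mu> summable_on UNIV"
    and x: "t n < x" "x < t (n+1)"
  shows "(\<lambda>k. \<mu> k / (x - t k)) summable_on A"
proof -
  define d where "d = min (x - t n) (t (n+1) - x)"
  have d: "d > 0" using x unfolding d_def by auto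
  have dist: "\<bar>x - t k\<bar> \<ge> d" for k
  proof (cases "k \<le> n")
    case True then have "t k \<le> t n" using tm by (simp add: strict_mono_less_eq)
    then show ?thesis unfolding d_def using x by auto
  next
    case False then have "t (n+1) \<le> t k" using tm by (simp add: strict_mono_less_eq)
    then show ?thesis unfolding d_def using x by auto
  qed
  have "(\<lambda>k. \<mu> k * (1/d)) summable_on UNIV" using ms by (rule summable_on_cmult_left)
  then have "(\<lambda>k. norm (\<mu> k * (1/d))) summable_on UNIV"
    by (rule Infinite_Sum.summable_on_iff_abs_summable_on_real[THEN iffD1])
  then have "(\<lambda>k. norm (\<mu> k / (x - t k))) summable_on UNIV"
  proof (rule Infinite_Sum.abs_summable_on_comparison_test)
    fix k :: int
    have "\<bar>\<mu> k / (x - t k)\<bar> = \<mu> k / \<bar>x - t k\<bar>" using mu[of k] by (simp add: abs_div_pos)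
    also have "\<dots> \<le> \<mu> k / d" using mu[of k] dist[of k] d by (intro divide_left_mono) auto
    finally show "norm (\<mu> k / (x - t k)) \<le> norm (\<mu> k * (1/d))" using mu[of k] d by simp
  qed
  then have "(\<lambda>k. \<mu> k / (x - t k)) summable_on UNIV"
    by (rule Infinite_Sum.summable_on_iff_abs_summable_on_real[THEN iffD2])
  then show ?thesis by (rule summable_on_subset_banach) simp
qed

lemma tail_small:
  fixes \<mu> :: "int \<Rightarrow> real"
  assumes mu: "\<And>k. \<mu> k \<ge> 0" and ms: "\<mu> summable_on UNIV" and e: "e > 0"
  shows "\<exists>M. \<forall>A. A \<inter> {-M..M} = {} \<longrightarrow> infsum \<mu> A \<le> e"
proof -
  obtain F where F: "finite F" "dist (sum \<mu> F) (infsum \<mu> UNIV) \<le> e"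
    using infsum_finite_approximation[OF ms e] by auto
  obtain M where M: "\<And>k. k \<in> F \<Longrightarrow> \<bar>k\<bar> \<le> M"
  proof
    fix k assume "k \<in> F"
    then show "\<bar>k\<bar> \<le> Max (insert 0 (abs ` F))" using F(1) by (intro Max_ge) auto
  qed
  show ?thesis
  proof (intro exI allI impI)
    fix A assume A: "A \<inter> {-M..M} = {}"
    have AF: "A \<inter> F = {}" using A M by fastforce
    have sA: "\<mu> summable_on A" using ms by (rule summable_on_subset_banach) simp
    have "infsum \<mu> (A \<union> F) = infsum \<mu> A + sum \<mu> F"
      using infsum_Un_disjoint[OF sA summable_on_finite[OF F(1)] AF] F(1) by simp
    moreover have "infsum \<mu> (A \<union> F) \<le> infsum \<mu> UNIV"
      by (rule infsum_mono2) (use ms mu in \<open>auto intro: summable_on_subset_banach\<close>)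
    ultimately show "infsum \<mu> A \<le> e" using F(2) by (auto simp: dist_real_def)
  qed
qed

lemma tele:
  fixes t :: "int \<Rightarrow> real"
  shows "i \<le> j \<Longrightarrow> t j - t i = (\<Sum>k\<in>{i..<j}. t (k+1) - t k)"
proof (induction j rule: int_ge_induct)
  case base then show ?case by simp
next
  case (step j)
  have "{i..<j+1} = insert j {i..<j}" using step by auto
  then show ?case using step by simp
qed

lemma sum_up:
  fixes t :: "int \<Rightarrow> real"
  assumes "i \<le> j" "\<And>k. i \<le> k \<Longrightarrow> k < j \<Longrightarrow> t (k+1) - t k \<le> h"
  shows "t j - t i \<le> real_of_int (j - i) * h"
proof -
  have "t j - t i = (\<Sum>k\<in>{i..<j}. t (k+1) - t k)" using tele assms(1) by blast
  also have "\<dots> \<le> (\<Sum>k\<in>{i..<j}. h)" by (rule sum_mono) (use assms in auto)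
  also have "\<dots> = real_of_int (j - i) * h" using assms(1) by simp
  finally show ?thesis .
qed

lemma sum_lo:
  fixes t :: "int \<Rightarrow> real"
  assumes "i \<le> j" "\<And>k. i \<le> k \<Longrightarrow> k < j \<Longrightarrow> t (k+1) - t k \<ge> h"
  shows "t j - t i \<ge> real_of_int (j - i) * h"
proof -
  have "t j - t i = (\<Sum>k\<in>{i..<j}. t (k+1) - t k)" using tele assms(1) by blast
  moreover have "(\<Sum>k\<in>{i..<j}. h) \<le> (\<Sum>k\<in>{i..<j}. t (k+1) - t k)" by (rule sum_mono) (use assms in auto)
  moreover have "(\<Sum>k\<in>{i..<j}. h) = real_of_int (j - i) * h" using assms(1) by simp
  ultimately show ?thesis by linarith
qed


locale cs =
  fixes t \<mu> s :: "int \<Rightarrow> real" and a :: nat and \<rho> C :: real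
  assumes tm: "strict_mono t" and ttop: "filterlim t at_top at_top" and tbot: "filterlim t at_bot at_bot"
    and mu: "\<And>n. \<mu> n > 0" and ms: "\<mu> summable_on UNIV"
    and sint: "\<And>n. t n < s n \<and> s n < t (n+1)"
    and szero: "\<And>n. infsum (\<lambda>k. \<mu> k / (s n - t k)) UNIV = 0"
    and Cpos: "C > 0"
    and comp: "\<And>n k. 0 \<le> n \<Longrightarrow> n \<le> k \<Longrightarrow> k \<le> 2*n \<Longrightarrow>
        t (k+1) - t k \<le> C * (t (n+1) - t n) \<and> t (n+1) - t n \<le> C * (t (k+1) - t k)"
    and a2: "a \<ge> 2" and rho: "\<rho> > 1"
    and growth: "\<And>n. n > 0 \<Longrightarrow> \<rho> * \<bar>t n\<bar> \<le> \<bar>t (int a * n)\<bar>"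
begin

definition I where "I k = t (k+1) - t k"

lemma tlt: "i < j \<Longrightarrow> t i < t j" using tm by (simp add: strict_mono_less)
lemma tle: "i \<le> j \<Longrightarrow> t i \<le> t j" using tm by (simp add: strict_mono_less_eq)
lemma Ipos: "I k > 0" unfolding I_def using tlt[of k "k+1"] by simp

lemma C1: "C \<ge> 1"
proof -
  have "I 0 \<le> C * I 0" using comp[of 0 0] unfolding I_def by simp
  then show ?thesis using Ipos[of 0] by (simp add: mult_le_cancel_right1)
qed

lemma compI: "0 \<le> n \<Longrightarrow> n \<le> k \<Longrightarrow> k \<le> 2*n \<Longrightarrow> I k \<le> C * I n \<and> I n \<le> C * I k"
  using comp unfolding I_def by blast

lemma chain: "0 \<le> N \<Longrightarrow> N \<le> k \<Longrightarrow> k \<le> 2^j * N \<Longrightarrow> I k \<le> C^j * I N"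
proof (induction j arbitrary: k)
  case 0 then show ?case by simp
next
  case (Suc j)
  show ?case
  proof (cases "k \<le> 2^j * N")
    case True
    then have "I k \<le> C^j * I N" using Suc by auto
    also have "\<dots> \<le> C^(Suc j) * I N"
      using C1 Ipos[of N] by (intro mult_right_mono) (auto intro: power_increasing)
    finally show ?thesis .
  next
    case False
    have h: "0 \<le> 2^j * N" using Suc.prems by simp
    have "k \<le> 2 * (2^j * N)" using Suc.prems by (simp add: mult.assoc)
    then have "I k \<le> C * I (2^j * N)" using compI[OF h, of k] False by auto
    also have "I (2^j * N) \<le> C^j * I N" using Suc.IH[of "2^j * N"] Suc.prems
      by (simp add: mult_le_cancel_right1 h)
    then have "C * I (2^j * N) \<le> C * (C^j * I N)" using Cpos by simp
    finally show ?thesis by (simp add: mult.assoc)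
  qed
qed

lemma upper: "0 \<le> N \<Longrightarrow> N \<le> k \<Longrightarrow> k \<le> 2^a * N \<Longrightarrow> I k \<le> C^a * I N"
  by (rule chain)

lemma lower: assumes "1 \<le> N" "N \<le> k" "k \<le> 4*N+4" shows "I N \<le> C^3 * I k"
proof -
  have C3: "C * I k \<le> C^3 * I k" "C^2 * I k \<le> C^3 * I k"
    using C1 Ipos[of k] by (auto intro!: mult_right_mono power_increasing[of 1 3 C, simplified]
        power_increasing[of 2 3 C, simplified])
  consider "k \<le> 2*N" | "2*N < k" "k \<le> 2*N+2" | "2*N+2 \<le> k" using assms by linarith
  then show ?thesis
  proof cases
    case 1 then show ?thesis using compI[of N k] assms C3 by auto
  next
    case 2
    have "I (N+1) \<le> C * I k" using compI[of "N+1" k] assms 2 by auto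
    moreover have "I N \<le> C * I (N+1)" using compI[of N "N+1"] assms by auto
    moreover have "C * I (N+1) \<le> C * (C * I k)" using calculation Cpos by (intro mult_left_mono) auto
    ultimately have "I N \<le> C * (C * I k)" by linarith
    then show ?thesis using C3 by (simp add: power2_eq_square mult.assoc)
  next
    case 3
    have "I (2*N+2) \<le> C * I k" using compI[of "2*N+2" k] assms 3 by auto
    moreover have "I (N+1) \<le> C * I (2*N+2)" using compI[of "N+1" "2*N+2"] assms by auto
    moreover have "I N \<le> C * I (N+1)" using compI[of N "N+1"] assms by auto
    ultimately have h: "I (2*N+2) \<le> C * I k" "I (N+1) \<le> C * I (2*N+2)" "I N \<le> C * I (N+1)" by auto
    have "C * I (2*N+2) \<le> C * (C * I k)" using h Cpos by (intro mult_left_mono) auto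
    then have "I (N+1) \<le> C * (C * I k)" using h by linarith
    then have "C * I (N+1) \<le> C * (C * (C * I k))" using Cpos by (intro mult_left_mono) auto
    then have "I N \<le> C * (C * (C * I k))" using h by linarith
    then show ?thesis by (simp add: power3_eq_cube mult.assoc)
  qed
qed

definition K where "K = (real a - 1) * C^a / (\<rho> - 1) + 3 * C^a"

lemma Kpos: "K > 0"
proof -
  have "(real a - 1) * C^a / (\<rho> - 1) \<ge> 0" using a2 rho Cpos by simp
  moreover have "C^a > 0" using Cpos by simp
  ultimately show ?thesis unfolding K_def by linarith
qed

lemma geom:
  assumes N: "N \<ge> 1" and tN: "t N > 0"
  shows "t (2*N+2) \<le> K * (N * I N)" "t (4*N+5) - t (2*N+2) \<ge> (N * I N) / C^3"
proof -
  have a2N: "int a * N \<le> 2^a * N"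
  proof -
    have "int a \<le> 2^a" using less_exp[of a] by (metis of_nat_less_iff of_nat_numeral of_nat_power less_imp_le)
    then show ?thesis using N by (intro mult_right_mono) auto
  qed
  have aN: "int a * N > N"
  proof -
    have "int a \<ge> 2" using a2 by simp
    then have "int a * N \<ge> 2 * N" using N by (intro mult_right_mono) auto
    then show ?thesis using N by linarith
  qed
  have pos: "t (int a * N) > 0" using tlt[OF aN] tN by simp
  have "\<rho> * t N \<le> t (int a * N)" using growth[of N] N tN pos by simp
  moreover have "t (int a * N) - t N \<le> real_of_int (int a * N - N) * (C^a * I N)"
  proof (rule sum_up)
    fix k assume k: "N \<le> k" "k < int a * N"
    then have "k \<le> 2^a * N" using a2N by linarith
    then show "t (k+1) - t k \<le> C^a * I N" using upper[of N k] N k unfolding I_def by auto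
  qed (use aN in auto)
  ultimately have "(\<rho> - 1) * t N \<le> (real a - 1) * (N * (C^a * I N))"
    by (simp add: algebra_simps)
  then have tNb: "t N \<le> (real a - 1) * C^a / (\<rho> - 1) * (N * I N)"
    using rho by (simp add: field_simps)
  have a4: "(4::int) \<le> 2^a"
  proof -
    have "(2::int)^2 \<le> 2^a" using a2 by (intro power_increasing) auto
    then show ?thesis by simp
  qed
  have "t (2*N+2) - t N \<le> real_of_int (2*N+2 - N) * (C^a * I N)"
  proof (rule sum_up)
    fix k assume k: "N \<le> k" "k < 2*N+2"
    have "4 * N \<le> 2^a * N" using a4 N by (intro mult_right_mono) auto
    then have "k \<le> 2^a * N" using k N by linarith
    then show "t (k+1) - t k \<le> C^a * I N" using upper[of N k] N k unfolding I_def by auto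
  qed (use N in auto)
  also have "\<dots> \<le> 3 * C^a * (N * I N)"
  proof -
    have "real_of_int (2*N+2 - N) \<le> 3 * N" using N by simp
    moreover have "C^a * I N > 0" using Cpos Ipos[of N] by simp
    ultimately have "real_of_int (2*N+2 - N) * (C^a * I N) \<le> (3 * N) * (C^a * I N)"
      by (intro mult_right_mono) auto
    then show ?thesis by (simp add: mult_ac)
  qed
  finally show "t (2*N+2) \<le> K * (N * I N)" using tNb unfolding K_def by (simp add: algebra_simps)
  have "t (4*N+5) - t (2*N+2) \<ge> real_of_int (4*N+5 - (2*N+2)) * (I N / C^3)"
  proof (rule sum_lo)
    fix k assume "2*N+2 \<le> k" "k < 4*N+5"
    then have "I N \<le> C^3 * I k" using N by (intro lower) auto
    then show "I N / C^3 \<le> t (k+1) - t k" using Cpos by (simp add: divide_le_eq I_def mult.commute)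
  qed (use N in auto)
  moreover have "real_of_int (4*N+5 - (2*N+2)) * (I N / C^3) \<ge> (N * I N) / C^3"
    using N Ipos[of N] Cpos by (simp add: divide_le_eq field_simps)
  ultimately show "t (4*N+5) - t (2*N+2) \<ge> (N * I N) / C^3" by linarith
qed

end


context cs begin

lemma key:
  assumes N: "N \<ge> 1" and tN: "t N > \<bar>t 0\<bar>" and n: "N \<le> n" "n \<le> 2*N+1"
  shows "(\<Sum>k\<in>{N div 2<..4*N+4}. \<mu> k / (s n - t k))
      \<le> - (\<mu> 0 / (t (2*N+2) - t 0) - infsum \<mu> {4*N+4<..} / (t (4*N+5) - t (2*N+2)))"
proof -
  define L where "L = N div 2"
  define U where "U = 4*N+4"
  define x where "x = s n"
  define g where "g k = \<mu> k / (x - t k)" for k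
  have x: "t n < x" "x < t (n+1)" using sint[of n] unfolding x_def by auto
  have gs: "g summable_on A" for A unfolding g_def
    by (rule summ_local[OF tm _ ms x]) (use mu in \<open>auto intro: less_imp_le\<close>)
  have LU: "L < U" unfolding L_def U_def using N by presburger
  have U: "UNIV = {..L} \<union> ({L<..U} \<union> {U<..})" by auto
  have "infsum g UNIV = infsum g {..L} + (infsum g {L<..U} + infsum g {U<..})"
  proof -
    have "infsum g ({..L} \<union> ({L<..U} \<union> {U<..})) = infsum g {..L} + infsum g ({L<..U} \<union> {U<..})"
      by (rule infsum_Un_disjoint[OF gs gs]) (use LU in auto)
    also have "infsum g ({L<..U} \<union> {U<..}) = infsum g {L<..U} + infsum g {U<..}"
      by (rule infsum_Un_disjoint[OF gs gs]) auto
    finally show ?thesis unfolding U[symmetric] .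
  qed
  moreover have "infsum g UNIV = 0" using szero[of n] unfolding g_def x_def by simp
  ultimately have split: "infsum g {..L} + sum g {L<..U} + infsum g {U<..} = 0" by simp
  have t0x: "t 0 < x" using tle[of 0 n] x N n by auto
  have xt: "x < t (2*N+2)" using x tle[of "n+1" "2*N+2"] n by auto
  have left: "infsum g {..L} \<ge> \<mu> 0 / (t (2*N+2) - t 0)"
  proof -
    have "sum g {0} \<le> infsum g {..L}"
    proof (rule finite_sum_le_infsum[OF gs])
      show "{0} \<subseteq> {..L}" unfolding L_def using N by auto
      fix k assume "k \<in> {..L} - {0}"
      then have "k \<le> n" unfolding L_def using N n by auto
      then have "t k < x" using tle[of k n] x by auto
      then show "g k \<ge> 0" unfolding g_def using mu[of k] by auto
    qed simp
    moreover have "\<mu> 0 / (t (2*N+2) - t 0) \<le> \<mu> 0 / (x - t 0)"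
      using mu[of 0] t0x xt by (intro divide_left_mono) auto
    ultimately show ?thesis unfolding g_def by simp
  qed
  define D where "D = t (U+1) - t (2*N+2)"
  have U1: "U + 1 = 4*N+5" unfolding U_def by simp
  have "t (2*N+2) < t (4*N+5)" using tlt N by simp
  then have D: "D > 0" unfolding D_def U1 by simp
  have right: "infsum g {U<..} \<ge> - (infsum \<mu> {U<..} / D)"
  proof -
    have "infsum (\<lambda>k. \<mu> k * (- 1 / D)) {U<..} \<le> infsum g {U<..}"
    proof (rule infsum_mono)
      show "(\<lambda>k. \<mu> k * (- 1 / D)) summable_on {U<..}"
        by (rule summable_on_cmult_left) (rule summable_on_subset_banach[OF ms], simp)
      show "g summable_on {U<..}" by (rule gs)
      fix k assume k: "k \<in> {U<..}"
      have "t (U+1) \<le> t k" using k tle by auto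
      then have "x - t k \<le> - D" "- D < 0" using xt D unfolding D_def by auto
      then have "inverse (- D) \<le> inverse (x - t k)" by (intro le_imp_inverse_le_neg) auto
      then have "\<mu> k * inverse (- D) \<le> \<mu> k * inverse (x - t k)" using mu[of k]
        by (intro mult_left_mono) auto
      then show "\<mu> k * (- 1 / D) \<le> g k" unfolding g_def by (simp add: divide_inverse)
    qed
    moreover have "infsum (\<lambda>k. \<mu> k * (- 1 / D)) {U<..} = infsum \<mu> {U<..} * (- 1 / D)"
      by (rule infsum_cmult_left) (rule summable_on_subset_banach[OF ms], simp)
    ultimately show ?thesis by simp
  qed
  have "sum g {L<..U} \<le> - (\<mu> 0 / (t (2*N+2) - t 0) - infsum \<mu> {U<..} / D)"
    using split left right by linarith
  then show ?thesis unfolding g_def x_def L_def U_def D_def by (simp add: add.assoc)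
qed

end


context cs begin

lemma block:
  assumes delta: "\<delta> > 0" and eps: "\<epsilon> > 0"
  shows "\<exists>N1\<ge>1. \<forall>N\<ge>N1. real (card ({n. t (n+1) > 0 \<and> t (n+1) - s n \<ge> \<delta> * (t (n+1) - t n)}
            \<inter> {N..2*N+1})) \<le> \<epsilon> * real_of_int N"
proof -
  define S where "S = {n. t (n+1) > 0 \<and> t (n+1) - s n \<ge> \<delta> * (t (n+1) - t n)}"
  define \<mu>0 where "\<mu>0 = \<mu> 0"
  have mu0: "\<mu>0 > 0" unfolding \<mu>0_def using mu by simp
  have C3: "C^3 > 0" using Cpos by simp
  define \<eta>1 where "\<eta>1 = \<mu>0 / (4 * K * C^3)"
  define \<eta>2 where "\<eta>2 = \<epsilon> * \<delta> * \<mu>0 / (4 * K * C^3)"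
  have eta: "\<eta>1 > 0" "\<eta>2 > 0" unfolding \<eta>1_def \<eta>2_def using mu0 Kpos C3 delta eps by auto
  have mu_nn: "\<And>k. \<mu> k \<ge> 0" using mu less_imp_le by blast
  obtain M1 where M1: "\<And>A. A \<inter> {-M1..M1} = {} \<Longrightarrow> infsum \<mu> A \<le> \<eta>1"
    using tail_small[OF mu_nn ms eta(1)] by blast
  obtain M2 where M2: "\<And>A. A \<inter> {-M2..M2} = {} \<Longrightarrow> infsum \<mu> A \<le> \<eta>2"
    using tail_small[OF mu_nn ms eta(2)] by blast
  have "\<forall>\<^sub>F n in at_top. \<bar>t 0\<bar> + 1 \<le> t n" using ttop by (simp add: filterlim_at_top)
  then obtain Nt where Nt: "\<And>N. N \<ge> Nt \<Longrightarrow> \<bar>t 0\<bar> + 1 \<le> t N" by (auto simp: eventually_at_top_linorder)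
  define N1 where "N1 = max 1 (max Nt (max M1 (2*M2+2)))"
  show ?thesis unfolding S_def[symmetric]
  proof (intro exI[of _ N1] conjI allI impI)
    show "N1 \<ge> 1" unfolding N1_def by simp
    fix N assume NN1: "N \<ge> N1"
    have N: "N \<ge> 1" "N \<ge> Nt" "N \<ge> M1" "N \<ge> 2*M2+2" using NN1 unfolding N1_def by auto
    have tN: "t N > \<bar>t 0\<bar>" using Nt[OF N(2)] by simp
    then have tN0: "t N > 0" by simp
    define W where "W = real_of_int N * I N"
    have W: "W > 0" unfolding W_def using N Ipos[of N] by simp
    have g1: "t (2*N+2) \<le> K * W" and g2: "t (4*N+5) - t (2*N+2) \<ge> W / C^3"
      using geom[OF N(1) tN0] unfolding W_def by auto
    define L where "L = N div 2"
    define U where "U = 4*N+4"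
    have LU: "L < U" unfolding L_def U_def using N by presburger
    define T where "T = infsum \<mu> {4*N+4<..}"
    have T: "T \<le> \<eta>1" "T \<ge> 0" unfolding T_def using N(3) mu_nn by (auto intro!: M1 infsum_nonneg)
    define V where "V = (\<Sum>k\<in>{L<..U}. \<mu> k)"
    have "L \<ge> M2 + 1" unfolding L_def using N(4) by presburger
    then have "{L<..U} \<inter> {-M2..M2} = {}" by fastforce
    then have V: "V \<le> \<eta>2" unfolding V_def using M2[of "{L<..U}"] by simp
    have t2: "t (2*N+2) \<ge> t N" using tle[of N "2*N+2"] N by simp
    have den1: "t (2*N+2) - t 0 > 0" "t (2*N+2) - t 0 \<le> 2 * (K * W)" using tN t2 g1 by auto
    define lam where "lam = \<mu>0 / (t (2*N+2) - t 0) - T / (t (4*N+5) - t (2*N+2))"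
    have first: "\<mu>0 / (t (2*N+2) - t 0) \<ge> \<mu>0 / (2 * (K * W))"
      using den1 mu0 by (intro divide_left_mono) (auto intro: mult_pos_pos)
    have second: "T / (t (4*N+5) - t (2*N+2)) \<le> \<mu>0 / (4 * (K * W))"
    proof -
      have "W / C^3 > 0" using W C3 by simp
      then have "T / (t (4*N+5) - t (2*N+2)) \<le> T / (W / C^3)" using g2 T by (intro frac_le) auto
      also have "\<dots> \<le> \<eta>1 / (W / C^3)" using T \<open>W / C^3 > 0\<close> by (intro divide_right_mono) auto
      also have "\<dots> = \<mu>0 / (4 * (K * W))" unfolding \<eta>1_def using C3 W Kpos by (simp add: field_simps)
      finally show ?thesis .
    qed
    have lam: "lam \<ge> \<mu>0 / (4 * (K * W))"
    proof -
      have "\<mu>0 / (2 * (K * W)) = 2 * (\<mu>0 / (4 * (K * W)))" by (simp add: field_simps)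
      then show ?thesis unfolding lam_def using first second by linarith
    qed
    have lampos: "lam > 0" using lam mu0 Kpos W by (smt (verit) divide_pos_pos mult_pos_pos)
    define S' where "S' = S \<inter> {N..2*N+1}"
    have S'sub: "S' \<subseteq> {L<..<U}" unfolding S'_def L_def U_def using N by auto
    have bc: "(\<Sum>n\<in>S'. t (n+1) - s n) \<le> V / lam"
      unfolding V_def
    proof (rule boole_count[OF tm LU _ lampos S'sub])
      show "\<And>k. k \<in> {L<..U} \<Longrightarrow> 0 < \<mu> k" using mu by blast
      fix n assume n: "n \<in> S'"
      then have nN: "N \<le> n" "n \<le> 2*N+1" unfolding S'_def by auto
      show "t n < s n \<and> s n < t (n+1) \<and> (\<Sum>k\<in>{L<..U}. \<mu> k / (s n - t k)) \<le> - lam"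
        using sint[of n] key[OF N(1) tN nN] unfolding lam_def L_def U_def T_def \<mu>0_def by auto
    qed
    define q where "q = \<delta> * (I N / C^3)"
    have q: "q > 0" unfolding q_def using delta Ipos[of N] C3 by simp
    have each: "t (n+1) - s n \<ge> q" if "n \<in> S'" for n
    proof -
      have nN: "N \<le> n" "n \<le> 2*N+1" "t (n+1) - s n \<ge> \<delta> * I n"
        using that unfolding S'_def S_def I_def by auto
      have "I N \<le> C^3 * I n" using lower[of N n] N nN by auto
      then have "I N / C^3 \<le> I n" using C3 by (simp add: divide_le_eq mult.commute)
      then have "q \<le> \<delta> * I n" unfolding q_def using delta by (intro mult_left_mono) auto
      then show ?thesis using nN by linarith
    qed
    have finS': "finite S'" unfolding S'_def by simp
    have "real (card S') * q \<le> (\<Sum>n\<in>S'. t (n+1) - s n)"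
      using sum_mono[of S' "\<lambda>n. q" "\<lambda>n. t (n+1) - s n"] each by simp
    also have "\<dots> \<le> V / lam" by (rule bc)
    also have "\<dots> \<le> \<eta>2 / (\<mu>0 / (4 * (K * W)))"
    proof -
      have pos: "\<mu>0 / (4 * (K * W)) > 0" using mu0 Kpos W by simp
      have "V \<ge> 0" unfolding V_def using mu_nn by (simp add: sum_nonneg)
      then have "V / lam \<le> V / (\<mu>0 / (4 * (K * W)))" using lam pos by (intro frac_le) auto
      also have "\<dots> \<le> \<eta>2 / (\<mu>0 / (4 * (K * W)))" using V pos by (intro divide_right_mono) auto
      finally show ?thesis .
    qed
    also have "\<dots> = \<epsilon> * real_of_int N * q"
      unfolding \<eta>2_def q_def W_def using mu0 Kpos C3 by (simp add: field_simps)
    finally have "real (card S') * q \<le> \<epsilon> * real_of_int N * q" .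
    then show "real (card (S \<inter> {N..2*N+1})) \<le> \<epsilon> * real_of_int N" using q unfolding S'_def by simp
  qed
qed

end


context cs begin

lemma core:
  assumes delta: "\<delta> > 0"
  shows "zero_density {n. t (n+1) > 0 \<and> t (n+1) - s n \<ge> \<delta> * (t (n+1) - t n)}"
proof -
  have "\<forall>\<^sub>F n in at_bot. t n \<le> 0" using tbot by (simp add: filterlim_at_bot)
  then obtain b where b: "\<And>n. n \<le> b \<Longrightarrow> t n \<le> 0" by (auto simp: eventually_at_bot_linorder)
  show ?thesis
  proof (rule density_from_blocks[where b = b])
  show "{n. t (n+1) > 0 \<and> t (n+1) - s n \<ge> \<delta> * (t (n+1) - t n)} \<subseteq> {b..}"
  proof
    fix n assume "n \<in> {n. t (n+1) > 0 \<and> t (n+1) - s n \<ge> \<delta> * (t (n+1) - t n)}"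
    then have "t (n+1) > 0" by simp
    then have "\<not> n + 1 \<le> b" using b by force
    then show "n \<in> {b..}" by simp
  qed
  fix \<epsilon> :: real assume "\<epsilon> > 0"
  then show "\<exists>N1\<ge>1. \<forall>N\<ge>N1. real (card ({n. t (n+1) > 0 \<and> t (n+1) - s n \<ge> \<delta> * (t (n+1) - t n)}
            \<inter> {N..2*N+1})) \<le> \<epsilon> * real_of_int N"
    using block[OF delta] by blast
  qed
qed

end


theorem corollary5p4:
  fixes t :: "int \<Rightarrow> real" and \<mu> :: "int \<Rightarrow> real" and s :: "int \<Rightarrow> real"
    and A B :: "complex \<Rightarrow> complex" and a :: nat and \<rho> :: real
  assumes t_mono: "strict_mono t"
    and t_top: "filterlim t at_top at_top"
    and t_bot: "filterlim t at_bot at_bot"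
    and mu_pos: "\<And>n. \<mu> n > 0"
    and mu_sum: "\<mu> summable_on UNIV"
    and A_entire: "A holomorphic_on UNIV"
    and A_real: "\<And>x::real. A (complex_of_real x) \<in> \<real>"
    and A_zeros: "{z. A z = 0} = range (\<lambda>n. complex_of_real (t n))"
    and A_simple: "\<And>n. deriv A (complex_of_real (t n)) \<noteq> 0"
    and B_entire: "B holomorphic_on UNIV"
    and B_def: "\<And>z. A z \<noteq> 0 \<Longrightarrow>
                B z / A z = (\<Sum>\<^sub>\<infinity>n. complex_of_real (\<mu> n) / (z - complex_of_real (t n)))"
    and s_int: "\<And>n. t n < s n \<and> s n < t (n + 1)"
    and s_zero: "\<And>n. B (complex_of_real (s n)) = 0"
    and comparable: "\<exists>C>0. \<forall>n k. (n \<le> k \<and> k \<le> 2 * n) \<or> (2 * n \<le> k \<and> k \<le> n) \<longrightarrow>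
                 (t (k + 1) - t k) \<le> C * (t (n + 1) - t n) \<and>
                 (t (n + 1) - t n) \<le> C * (t (k + 1) - t k)"
    and a_ge: "a \<ge> 2" and rho_gt: "\<rho> > 1"
    and growth: "\<And>n. n \<noteq> 0 \<Longrightarrow> \<bar>t (int a * n)\<bar> \<ge> \<rho> * \<bar>t n\<bar>"
  shows "\<forall>\<delta>>0. zero_density {n. t n > 0 \<and> t (n + 1) - s n \<ge> \<delta> * (t (n + 1) - t n)} \<and>
               zero_density {n. t n < 0 \<and> s n - t n \<ge> \<delta> * (t (n + 1) - t n)}"
proof (intro allI impI)
  fix \<delta> :: real assume delta: "\<delta> > 0"
  obtain C where C: "C > 0" and Cc: "\<And>n k. (n \<le> k \<and> k \<le> 2 * n) \<or> (2 * n \<le> k \<and> k \<le> n) \<Longrightarrow>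
                 (t (k + 1) - t k) \<le> C * (t (n + 1) - t n) \<and>
                 (t (n + 1) - t n) \<le> C * (t (k + 1) - t k)" using comparable by blast
  have tle: "\<And>i j. i \<le> j \<Longrightarrow> t i \<le> t j" using t_mono by (simp add: strict_mono_less_eq)
  have mu_nn: "\<And>k. \<mu> k \<ge> 0" using mu_pos less_imp_le by blast
  have realzero: "infsum (\<lambda>k. \<mu> k / (s n - t k)) UNIV = 0" for n
  proof -
    define z where "z = complex_of_real (s n)"
    have Anz: "A z \<noteq> 0"
    proof
      assume "A z = 0"
      then have "z \<in> range (\<lambda>n. complex_of_real (t n))" using A_zeros by blast
      then obtain k where "z = complex_of_real (t k)" by auto
      then have sk: "s n = t k" unfolding z_def by simp
      show False
      proof (cases "k \<le> n")
        case True then show False using tle[of k n] sk s_int[of n] by auto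
      next
        case False then show False using tle[of "n+1" k] sk s_int[of n] by auto
      qed
    qed
    have "(\<Sum>\<^sub>\<infinity>k. complex_of_real (\<mu> k) / (z - complex_of_real (t k))) = 0"
      using B_def[OF Anz] s_zero[of n] unfolding z_def by simp
    moreover have "complex_of_real (\<mu> k / (s n - t k)) = complex_of_real (\<mu> k) / (z - complex_of_real (t k))"
      for k unfolding z_def by simp
    ultimately have h1: "(\<Sum>\<^sub>\<infinity>k. complex_of_real (\<mu> k / (s n - t k))) = 0" by (simp add: z_def)
    have gs: "(\<lambda>k. \<mu> k / (s n - t k)) summable_on UNIV"
      by (rule summ_local[OF t_mono mu_nn mu_sum]) (use s_int[of n] in auto)
    have "(\<Sum>\<^sub>\<infinity>k. complex_of_real (\<mu> k / (s n - t k))) = complex_of_real (infsum (\<lambda>k. \<mu> k / (s n - t k)) UNIV)"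
      by (rule infsumI[OF has_sum_of_real[OF has_sum_infsum[OF gs]]])
    then have "complex_of_real (infsum (\<lambda>k. \<mu> k / (s n - t k)) UNIV) = 0" using h1 by simp
    then show ?thesis by simp
  qed
  have P: "cs t \<mu> s a \<rho> C"
  proof
    show "\<And>n k. 0 \<le> n \<Longrightarrow> n \<le> k \<Longrightarrow> k \<le> 2*n \<Longrightarrow>
        t (k+1) - t k \<le> C * (t (n+1) - t n) \<and> t (n+1) - t n \<le> C * (t (k+1) - t k)"
      using Cc by blast
    show "\<And>n. n > 0 \<Longrightarrow> \<rho> * \<bar>t n\<bar> \<le> \<bar>t (int a * n)\<bar>" using growth by simp
  qed (use t_mono t_top t_bot mu_pos mu_sum s_int realzero C a_ge rho_gt in auto)
  have pos: "zero_density {n. t n > 0 \<and> t (n + 1) - s n \<ge> \<delta> * (t (n + 1) - t n)}"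
  proof (rule zd_mono[OF _ cs.core[OF P delta]])
    show "{n. t n > 0 \<and> t (n + 1) - s n \<ge> \<delta> * (t (n + 1) - t n)}
        \<subseteq> {n. t (n+1) > 0 \<and> t (n+1) - s n \<ge> \<delta> * (t (n+1) - t n)}"
    proof (intro subsetI)
      fix n assume "n \<in> {n. t n > 0 \<and> t (n + 1) - s n \<ge> \<delta> * (t (n + 1) - t n)}"
      then show "n \<in> {n. t (n+1) > 0 \<and> t (n+1) - s n \<ge> \<delta> * (t (n+1) - t n)}"
        using tle[of n "n+1"] by auto
    qed
  qed
  define t' where "t' n = - t (- n)" for n
  define \<mu>' where "\<mu>' n = \<mu> (- n)" for n
  define s' where "s' n = - s (- n - 1)" for n
  have P': "cs t' \<mu>' s' a \<rho> C"
  proof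
    show "strict_mono t'" unfolding t'_def
      by (rule strict_monoI) (use t_mono in \<open>simp add: strict_mono_less\<close>)
    show "filterlim t' at_top at_top"
      unfolding filterlim_at_top
    proof
      fix Z :: real
      have "\<forall>\<^sub>F n in at_bot. t n \<le> - Z" using t_bot by (simp add: filterlim_at_bot)
      then obtain b where b: "\<And>n. n \<le> b \<Longrightarrow> t n \<le> - Z" by (auto simp: eventually_at_bot_linorder)
      have "\<forall>n\<ge>- b. Z \<le> - t (- n)"
      proof (intro allI impI)
        fix n :: int assume "n \<ge> - b"
        then have "t (- n) \<le> - Z" using b[of "- n"] by simp
        then show "Z \<le> - t (- n)" by simp
      qed
      then show "\<forall>\<^sub>F n in at_top. Z \<le> t' n" unfolding eventually_at_top_linorder t'_def by blast
    qed
    show "filterlim t' at_bot at_bot"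
      unfolding filterlim_at_bot
    proof
      fix Z :: real
      have "\<forall>\<^sub>F n in at_top. - Z \<le> t n" using t_top by (simp add: filterlim_at_top)
      then obtain b where b: "\<And>n. n \<ge> b \<Longrightarrow> - Z \<le> t n" by (auto simp: eventually_at_top_linorder)
      have "\<forall>n\<le>- b. - t (- n) \<le> Z"
      proof (intro allI impI)
        fix n :: int assume "n \<le> - b"
        then have "- Z \<le> t (- n)" using b[of "- n"] by simp
        then show "- t (- n) \<le> Z" by simp
      qed
      then show "\<forall>\<^sub>F n in at_bot. t' n \<le> Z" unfolding eventually_at_bot_linorder t'_def by blast
    qed
    show "\<And>n. \<mu>' n > 0" unfolding \<mu>'_def using mu_pos by simp
    have inj: "inj (uminus :: int \<Rightarrow> int)" by (simp add: inj_def)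
    have surj: "range (uminus :: int \<Rightarrow> int) = UNIV" by (metis surj_def add.inverse_inverse)
    have r: "(\<mu> summable_on (uminus ` UNIV)) = ((\<mu> \<circ> uminus) summable_on UNIV)"
      by (rule summable_on_reindex) (simp add: inj)
    show "\<mu>' summable_on UNIV"
      using r mu_sum unfolding surj \<mu>'_def by (simp add: comp_def)
    show "\<And>n. t' n < s' n \<and> s' n < t' (n+1)"
    proof -
      fix n :: int
      have "t (-n-1) < s (-n-1) \<and> s (-n-1) < t (-n-1+1)" using s_int[of "-n-1"] by blast
      moreover have "-n-1+1 = -n" "- (n+1) = -n-1" by simp_all
      ultimately show "t' n < s' n \<and> s' n < t' (n+1)" unfolding t'_def s'_def by simp
    qed
    show "\<And>n. infsum (\<lambda>k. \<mu>' k / (s' n - t' k)) UNIV = 0"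
    proof -
      fix n
      define G where "G j = \<mu> j / (s (- n - 1) - t j)" for j
      have "(\<lambda>k. \<mu>' k / (s' n - t' k)) = (\<lambda>k. - (G \<circ> uminus) k)"
      proof
        fix k
        have "- s (- n - 1) - - t (- k) = - (s (- n - 1) - t (- k))" by simp
        then show "\<mu>' k / (s' n - t' k) = - (G \<circ> uminus) k"
          unfolding \<mu>'_def s'_def t'_def G_def comp_def by (simp only: divide_minus_right)
      qed
      then have "infsum (\<lambda>k. \<mu>' k / (s' n - t' k)) UNIV = - infsum (G \<circ> uminus) UNIV"
        by (simp add: infsum_uminus comp_def)
      also have "infsum (G \<circ> uminus) UNIV = infsum G (range uminus)"
        by (rule infsum_reindex[symmetric]) (simp add: inj)
      also have "\<dots> = 0" using realzero[of "- n - 1"] surj unfolding G_def by simp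
      finally show "infsum (\<lambda>k. \<mu>' k / (s' n - t' k)) UNIV = 0" by simp
    qed
    show "\<And>n k. 0 \<le> n \<Longrightarrow> n \<le> k \<Longrightarrow> k \<le> 2*n \<Longrightarrow>
        t' (k+1) - t' k \<le> C * (t' (n+1) - t' n) \<and> t' (n+1) - t' n \<le> C * (t' (k+1) - t' k)"
    proof -
      fix n k :: int assume nk: "0 \<le> n" "n \<le> k" "k \<le> 2*n"
      have h: "2 * (-n-1) \<le> (-k-1) \<and> (-k-1) \<le> (-n-1)" using nk by auto
      have x: "-k-1+1 = -k" "-(k+1) = -k-1" "-n-1+1 = -n" "-(n+1) = -n-1" by simp_all
      have e1: "t' (k+1) - t' k = t (-k-1 + 1) - t (-k-1)" unfolding t'_def x by simp
      have e2: "t' (n+1) - t' n = t (-n-1 + 1) - t (-n-1)" unfolding t'_def x by simp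
      show "t' (k+1) - t' k \<le> C * (t' (n+1) - t' n) \<and> t' (n+1) - t' n \<le> C * (t' (k+1) - t' k)"
        unfolding e1 e2 by (rule Cc[OF disjI2[OF h]])
    qed
    show "\<And>n. n > 0 \<Longrightarrow> \<rho> * \<bar>t' n\<bar> \<le> \<bar>t' (int a * n)\<bar>"
    proof -
      fix n :: int assume "n > 0"
      then have "\<rho> * \<bar>t (- n)\<bar> \<le> \<bar>t (int a * (- n))\<bar>" using growth[of "- n"] by simp
      moreover have "t' (int a * n) = - t (int a * (- n))" unfolding t'_def minus_mult_right by (rule refl)
      moreover have "t' n = - t (- n)" unfolding t'_def by (rule refl)
      ultimately show "\<rho> * \<bar>t' n\<bar> \<le> \<bar>t' (int a * n)\<bar>" by (simp only: abs_minus_cancel)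
    qed
  qed (use C a_ge rho_gt in auto)
  have neg0: "zero_density ((\<lambda>m. - m - 1) ` {n. t' (n+1) > 0 \<and> t' (n+1) - s' n \<ge> \<delta> * (t' (n+1) - t' n)})"
    by (rule zd_reflect[OF cs.core[OF P' delta]])
  have neg: "zero_density {n. t n < 0 \<and> s n - t n \<ge> \<delta> * (t (n + 1) - t n)}"
  proof (rule zd_mono[OF _ neg0])
    show "{n. t n < 0 \<and> s n - t n \<ge> \<delta> * (t (n + 1) - t n)}
        \<subseteq> (\<lambda>m. - m - 1) ` {n. t' (n+1) > 0 \<and> t' (n+1) - s' n \<ge> \<delta> * (t' (n+1) - t' n)}"
    proof
      fix n assume n: "n \<in> {n. t n < 0 \<and> s n - t n \<ge> \<delta> * (t (n + 1) - t n)}"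
      have e: "- (- n - 1) - 1 = n" "- (- n - 1 + 1) = n" "- (- n - 1) = n + 1" by simp_all
      have mem: "- n - 1 \<in> {n. t' (n+1) > 0 \<and> t' (n+1) - s' n \<ge> \<delta> * (t' (n+1) - t' n)}"
        using n unfolding t'_def s'_def e by (auto simp: add.commute)
      show "n \<in> (\<lambda>m. - m - 1) ` {n. t' (n+1) > 0 \<and> t' (n+1) - s' n \<ge> \<delta> * (t' (n+1) - t' n)}"
        by (rule image_eqI[of n "\<lambda>m. - m - 1" "- n - 1"]) (simp, rule mem)
    qed
  qed
  show "zero_density {n. t n > 0 \<and> t (n + 1) - s n \<ge> \<delta> * (t (n + 1) - t n)} \<and>
        zero_density {n. t n < 0 \<and> s n - t n \<ge> \<delta> * (t (n + 1) - t n)}"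
    using pos neg by (rule conjI)
qed


end
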